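(* Let $m\ge1$, $C_m$ cyclic with generator $c$, and for $d\mid m$ let $\zeta_d$ be a primitive $d$th root of unity. Consider the Wedderburn isomorphism $\omega_{\mathbb{Q},m}\colon\mathbb{Q}C_m\to\prod_{d\mid m}\mathbb{Q}(\zeta_d)$, $c\mapsto(\zeta_d)_{d\mid m}$. Given, for each $d\mid m$, an element $a_d(c)=\sum_{i\in\mathbb{Z}/m}a_{d,i}c^i\in\mathbb{Q}C_m$, write $a_d(\zeta_d)=\sum_{i\in\mathbb{Z}/m}a_{d,i}\zeta_d^i$. Then \[ \omega_{\mathbb{Q},m}^{-1}\bigl((a_d(\zeta_d))_{d\mid m}\bigr)=\frac1m\sum_{l\in\mathbb{Z}/m}c^l\Bigl[\sum_{d\mid m}d\sum_{k\in\mathbb{Z}/(m/d')}a_{d,\,l-kd'}\prod_{p\mid d,\ p\nmid k}\Bigl(-\frac1p\Bigr)\prod_{p\mid d,\ p\mid k}\Bigl(1-\frac1p\Bigr)\Bigr], \] where for $d\mid m$ the divisor $d'\mid m$ is defined by $v_p(d')=\max(v_p(d)-1,0)$ for all primes $p$, and the products run over primes $p$.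
   Context: $v_p$ is the $p$-adic valuation. For $p\mid d$ one has $p\mid m/d'$, so divisibility of $k\in\mathbb{Z}/(m/d')$ by $p$ is well defined, and $l-kd'$ is well defined in $\mathbb{Z}/m$. *)

theory Defs
  imports Complex_Main "HOL-Computational_Algebra.Primes"
begin

text \<open>Elements of the group algebra Q C_m are represented by their coefficient
  functions x :: nat => rat, where x i (for i < m) is the coefficient of c^i,
  i.e. indices in Z/m are represented by 0,...,m-1.\<close>

definition prim_root_unity :: "nat \<Rightarrow> complex \<Rightarrow> bool" where
  "prim_root_unity d z \<longleftrightarrow> z ^ d = 1 \<and> (\<forall>j. 0 < j \<and> j < d \<longrightarrow> z ^ j \<noteq> 1)"

definition eval_at :: "nat \<Rightarrow> (nat \<Rightarrow> rat) \<Rightarrow> complex \<Rightarrow> complex" where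
  "eval_at m a z = (\<Sum>i<m. of_rat (a i) * z ^ i)"

definition wedderburn :: "nat \<Rightarrow> (nat \<Rightarrow> complex) \<Rightarrow> (nat \<Rightarrow> rat) \<Rightarrow> nat \<Rightarrow> complex" where
  "wedderburn m \<zeta> x = (\<lambda>d. if d dvd m then eval_at m x (\<zeta> d) else 0)"

definition dprime :: "nat \<Rightarrow> nat" where
  "dprime d = (\<Prod>p\<in>prime_factors d. p ^ (multiplicity p d - 1))"

definition inv_coeff :: "nat \<Rightarrow> (nat \<Rightarrow> nat \<Rightarrow> rat) \<Rightarrow> nat \<Rightarrow> rat" where
  "inv_coeff m a l = (1 / of_nat m) *
     (\<Sum>d\<in>{d. d dvd m}. of_nat d *
        (\<Sum>k<m div dprime d.
           a d (nat ((int l - int k * int (dprime d)) mod int m)) *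
           (\<Prod>p\<in>{p\<in>prime_factors d. \<not> p dvd k}. - (1 / of_nat p)) *
           (\<Prod>p\<in>{p\<in>prime_factors d. p dvd k}. 1 - 1 / of_nat p)))"

end

theory Submission
  imports Defs
begin


lemma pow_mod_eq:
  fixes z :: complex
  assumes "z ^ e = 1"
  shows "z ^ n = z ^ (n mod e)"
proof -
  have "z ^ n = z ^ (e * (n div e) + n mod e)" by (simp only: mult_div_mod_eq)
  also have "\<dots> = (z ^ e) ^ (n div e) * z ^ (n mod e)" by (simp only: power_add power_mult)
  finally have "z ^ n = (z ^ e) ^ (n div e) * z ^ (n mod e)" .
  then show ?thesis using assms by simp
qed

lemma pow_cong_eq:
  fixes z :: complex
  assumes "z ^ e = 1" "int a mod int e = int b mod int e"
  shows "z ^ a = z ^ b"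
proof -
  have "a mod e = b mod e" using assms(2) by (metis of_nat_eq_iff zmod_int)
  then show ?thesis using pow_mod_eq[OF assms(1)] by metis
qed

lemma prim_pow_eq1:
  fixes z :: complex
  assumes "prim_root_unity e z" "e > 0"
  shows "z ^ n = 1 \<longleftrightarrow> e dvd n"
proof
  assume h: "z ^ n = 1"
  have ze: "z ^ e = 1" using assms unfolding prim_root_unity_def by simp
  have "z ^ (n mod e) = 1" using h pow_mod_eq[OF ze, of n] by simp
  moreover have "n mod e < e" using assms(2) by simp
  ultimately have "n mod e = 0" using assms(1) unfolding prim_root_unity_def by (meson neq0_conv)
  then show "e dvd n" by auto
next
  assume "e dvd n"
  then obtain t where "n = e * t" by auto
  then show "z ^ n = 1" using assms unfolding prim_root_unity_def by (simp add: power_mult)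
qed

lemma reindex_sum:
  fixes z :: complex and f :: "nat \<Rightarrow> complex"
  assumes "m > 0" "e dvd m" "z ^ e = 1"
  shows "(\<Sum>l<m. f (nat ((int l - int c) mod int m)) * z ^ l) = z ^ c * (\<Sum>i<m. f i * z ^ i)"
proof -
  have "(\<Sum>l<m. f (nat ((int l - int c) mod int m)) * z ^ l) = (\<Sum>i<m. z ^ c * (f i * z ^ i))"
  proof (rule sum.reindex_bij_witness[where j = "\<lambda>l. nat ((int l - int c) mod int m)" and i = "\<lambda>i. (i + c) mod m"])
    fix l assume "l \<in> {..<m}"
    then have lm: "l < m" by simp
    have "int ((nat ((int l - int c) mod int m) + c) mod m) = ((int l - int c) mod int m + int c) mod int m"
      using assms(1) by (simp add: zmod_int)
    also have "\<dots> = int l mod int m" by (simp add: mod_add_left_eq)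
    also have "\<dots> = int l" using lm by simp
    finally show "(nat ((int l - int c) mod int m) + c) mod m = l" by simp
  next
    fix l assume "l \<in> {..<m}"
    then show "nat ((int l - int c) mod int m) \<in> {..<m}" using assms(1)
      by (simp add: nat_less_iff)
  next
    fix i assume "i \<in> {..<m}"
    then have im: "i < m" by simp
    have "(int ((i + c) mod m) - int c) mod int m = ((int i + int c) mod int m - int c) mod int m"
      by (simp add: zmod_int)
    also have "\<dots> = int i mod int m" by (simp add: mod_diff_left_eq)
    also have "\<dots> = int i" using im by simp
    finally show "nat ((int ((i + c) mod m) - int c) mod int m) = i" by simp
  next
    fix i assume "i \<in> {..<m}"
    then show "(i + c) mod m \<in> {..<m}" using assms(1) by simp
  next
    fix l assume "l \<in> {..<m}"
    define g where "g = nat ((int l - int c) mod int m)"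
    have gi: "int g = (int l - int c) mod int m" unfolding g_def using assms(1) by simp
    have "int (c + g) mod int e = int l mod int e"
    proof -
      have "int (c + g) mod int e = (int c + (int l - int c) mod int m) mod int e" using gi by simp
      also have "\<dots> = (int c + (int l - int c)) mod int e"
        using assms(2) by (metis mod_add_right_eq mod_mod_cancel of_nat_dvd_iff)
      finally show ?thesis by simp
    qed
    then have "z ^ (c + g) = z ^ l" using pow_cong_eq[OF assms(3)] by blast
    then show "z ^ c * (f g * z ^ g) = f g * z ^ l" by (simp add: power_add)
  qed
  then show ?thesis by (simp add: sum_distrib_left)
qed

lemma geom_sum:
  fixes y :: complex
  assumes "s > 0" "s dvd N" "y ^ N = 1"
  shows "(\<Sum>k<N. (if s dvd k then 1 else 0) * y ^ k) = (if y ^ s = 1 then of_nat (N div s) else 0)"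
proof -
  have "(\<Sum>k<N. (if s dvd k then 1 else 0) * y ^ k) = (\<Sum>k<N. if s dvd k then y ^ k else 0)"
    by (intro sum.cong) auto
  also have "\<dots> = (\<Sum>k\<in>{k\<in>{..<N}. s dvd k}. y ^ k)"
    by (simp only: sum.inter_filter[OF finite_lessThan])
  also have "{k\<in>{..<N}. s dvd k} = (\<lambda>j. s * j) ` {..<N div s}"
  proof (intro set_eqI iffI)
    fix k assume "k \<in> {k\<in>{..<N}. s dvd k}"
    then obtain j where "k = s * j" "k < N" by auto
    then show "k \<in> (\<lambda>j. s * j) ` {..<N div s}" using assms
      by (metis dvd_div_mult_self imageI lessThan_iff mult.commute mult_less_cancel1)
  next
    fix k assume "k \<in> (\<lambda>j. s * j) ` {..<N div s}"
    then obtain j where "k = s * j" "j < N div s" by auto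
    then show "k \<in> {k\<in>{..<N}. s dvd k}" using assms
      by (metis (no_types, lifting) dvd_div_mult_self dvd_triv_left lessThan_iff mem_Collect_eq mult.commute mult_less_cancel1)
  qed
  also have "(\<Sum>k\<in>(\<lambda>j. s * j) ` {..<N div s}. y ^ k) = (\<Sum>j<N div s. (y ^ s) ^ j)"
    using assms(1) by (subst sum.reindex) (auto simp: inj_on_def power_mult)
  also have "\<dots> = (if y ^ s = 1 then of_nat (N div s) else 0)"
  proof -
    have "(y ^ s) ^ (N div s) = 1" using assms by (simp add: power_mult[symmetric])
    then show ?thesis by (simp add: sum_gp_strict)
  qed
  finally show ?thesis .
qed

lemma prod_ind:
  assumes "finite A"
  shows "(\<Prod>p\<in>A. if Q p then 1 else 0) = (if \<forall>p\<in>A. Q p then 1 else (0::'a::comm_semiring_1))"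
  using assms by (induction A rule: finite_induct) auto

lemma prod_primes_dvd:
  fixes k :: nat
  assumes "finite T" "\<forall>p\<in>T. prime p"
  shows "(\<Prod>T) dvd k \<longleftrightarrow> (\<forall>p\<in>T. p dvd k)"
  using assms
proof (induction T rule: finite_induct)
  case empty then show ?case by simp
next
  case (insert q T)
  have pq: "prime q" using insert.prems by simp
  have cop: "coprime q (\<Prod>T)"
  proof (rule prod_coprime_right)
    fix i assume iT: "i \<in> T"
    have "prime i" using insert.prems iT by simp
    moreover have "i \<noteq> q" using insert.hyps(2) iT by auto
    ultimately show "coprime q i" using pq primes_coprime[of q i] by simp
  qed
  have IH: "(\<Prod>T) dvd k \<longleftrightarrow> (\<forall>p\<in>T. p dvd k)" using insert.IH insert.prems by simp
  have "\<Prod>(insert q T) = q * \<Prod>T" using insert.hyps by simp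
  moreover have "q * \<Prod>T dvd k \<longleftrightarrow> q dvd k \<and> \<Prod>T dvd k"
    using cop by (meson divides_mult dvd_mult_left dvd_mult_right)
  ultimately show ?case using IH by simp
qed



lemma S3lem:
  fixes d e :: nat
  assumes d0: "d > 0" and e0: "e > 0"
  shows "(\<Sum>T\<in>Pow (prime_factors d). (\<Prod>p\<in>prime_factors d - T. (-1::complex)) * (if e dvd dprime d * \<Prod>T then 1 else 0)) = (if d = e then 1 else 0)"
proof -
  define P where "P = prime_factors d"
  define v where "v = (\<lambda>p. multiplicity p d)"
  define A where "A = (\<forall>q. prime q \<longrightarrow> q \<notin> P \<longrightarrow> multiplicity q e = 0)"
  have finP: "finite P" unfolding P_def by simp
  have primeP: "\<And>p. p \<in> P \<Longrightarrow> prime p" unfolding P_def by auto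
  have vpos: "\<And>p. p \<in> P \<Longrightarrow> v p > 0" unfolding P_def v_def using prime_factors_multiplicity by auto
  have d'eq: "dprime d = (\<Prod>p\<in>P. p ^ (v p - 1))" by (simp add: dprime_def P_def v_def)
  define f where "f = (\<lambda>p. if multiplicity p e \<le> v p then 1 else (0::complex))"
  define g where "g = (\<lambda>p. - (if multiplicity p e \<le> v p - 1 then 1 else (0::complex)))"
  have termeq: "(\<Prod>p\<in>P - T. (-1::complex)) * (if e dvd dprime d * \<Prod>T then 1 else 0)
      = (if A then 1 else 0) * ((\<Prod>p\<in>T. f p) * (\<Prod>p\<in>P - T. g p))" if T: "T \<subseteq> P" for T
  proof -
    define h where "h = (\<lambda>p. v p - 1 + (if p \<in> T then 1 else 0))"
    have fT: "finite T" using T finP finite_subset by auto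
    have pT: "\<Prod>T = (\<Prod>p\<in>P. p ^ (if p \<in> T then 1 else 0))"
    proof -
      have "(\<Prod>p\<in>P. p ^ (if p \<in> T then 1 else 0)) = (\<Prod>p\<in>P. if p \<in> T then p else 1)"
        by (intro prod.cong) auto
      also have "\<dots> = (\<Prod>p\<in>{p\<in>P. p \<in> T}. p)" by (simp only: prod.inter_filter[OF finP])
      also have "{p\<in>P. p \<in> T} = T" using T by auto
      finally show ?thesis by simp
    qed
    have dT: "dprime d * \<Prod>T = (\<Prod>p\<in>P. p ^ h p)"
    proof -
      have "(\<Prod>p\<in>P. p ^ h p) = (\<Prod>p\<in>P. p ^ (v p - 1) * p ^ (if p \<in> T then 1 else 0))"
        unfolding h_def by (simp only: power_add)
      also have "\<dots> = dprime d * \<Prod>T" unfolding d'eq pT by (rule prod.distrib)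
      finally show ?thesis by simp
    qed
    have "(\<Prod>p\<in>P. p ^ h p) > 0" by (rule prod_pos) (simp add: primeP prime_gt_0_nat)
    then have dT0: "dprime d * \<Prod>T \<noteq> 0" unfolding dT by simp
    have mult: "multiplicity q (dprime d * \<Prod>T) = (if q \<in> P then h q else 0)" if "prime q" for q
      unfolding dT using multiplicity_prod_prime_powers[OF finP primeP that] .
    have dvdT: "e dvd dprime d * \<Prod>T \<longleftrightarrow> A \<and> (\<forall>p\<in>P. multiplicity p e \<le> h p)"
    proof
      assume H: "e dvd dprime d * \<Prod>T"
      have le: "multiplicity q e \<le> multiplicity q (dprime d * \<Prod>T)" for q
        using dvd_imp_multiplicity_le[OF H dT0] .
      have "A" unfolding A_def
      proof (intro allI impI)
        fix q :: nat assume q: "prime q" "q \<notin> P"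
        then have "multiplicity q e \<le> 0" using le[of q] mult[OF q(1)] by simp
        then show "multiplicity q e = 0" by simp
      qed
      moreover have "\<forall>p\<in>P. multiplicity p e \<le> h p"
      proof
        fix p assume p: "p \<in> P"
        show "multiplicity p e \<le> h p" using le[of p] mult[OF primeP[OF p]] p by simp
      qed
      ultimately show "A \<and> (\<forall>p\<in>P. multiplicity p e \<le> h p)" by blast
    next
      assume H: "A \<and> (\<forall>p\<in>P. multiplicity p e \<le> h p)"
      show "e dvd dprime d * \<Prod>T"
      proof (rule multiplicity_le_imp_dvd)
        show "e \<noteq> 0" using e0 by simp
        fix q :: nat assume "prime q"
        then show "multiplicity q e \<le> multiplicity q (dprime d * \<Prod>T)"
          using H mult unfolding A_def by (cases "q \<in> P") auto
      qed
    qed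
    have cond: "(\<forall>p\<in>P. multiplicity p e \<le> h p) \<longleftrightarrow>
        (\<forall>p\<in>T. multiplicity p e \<le> v p) \<and> (\<forall>p\<in>P - T. multiplicity p e \<le> v p - 1)"
      unfolding h_def using T vpos by auto
    have F: "(\<Prod>p\<in>T. f p) = (if \<forall>p\<in>T. multiplicity p e \<le> v p then 1 else 0)"
      unfolding f_def using prod_ind[OF fT] .
    have G: "(\<Prod>p\<in>P - T. g p) = (\<Prod>p\<in>P - T. (-1::complex)) * (if \<forall>p\<in>P - T. multiplicity p e \<le> v p - 1 then 1 else 0)"
    proof -
      have "(\<Prod>p\<in>P - T. g p) = (\<Prod>p\<in>P - T. (-1::complex)) * (\<Prod>p\<in>P - T. if multiplicity p e \<le> v p - 1 then 1 else 0)"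
        unfolding g_def by (subst prod.distrib[symmetric]) (intro prod.cong refl, simp)
      then show ?thesis using prod_ind[of "P - T"] finP by simp
    qed
    show ?thesis unfolding F G dvdT cond
      by (cases A; cases "\<forall>p\<in>T. multiplicity p e \<le> v p"; cases "\<forall>p\<in>P - T. multiplicity p e \<le> v p - 1") simp_all
  qed
  have "(\<Sum>T\<in>Pow P. (\<Prod>p\<in>P - T. (-1::complex)) * (if e dvd dprime d * \<Prod>T then 1 else 0))
      = (\<Sum>T\<in>Pow P. (if A then 1 else 0) * ((\<Prod>p\<in>T. f p) * (\<Prod>p\<in>P - T. g p)))"
    using termeq by (intro sum.cong) auto
  also have "\<dots> = (if A then 1 else 0) * (\<Prod>p\<in>P. f p + g p)"
    by (simp only: prod_add[OF finP] sum_distrib_left)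
  also have "(\<Prod>p\<in>P. f p + g p) = (\<Prod>p\<in>P. if multiplicity p e = v p then 1 else 0)"
  proof (intro prod.cong refl)
    fix p assume "p \<in> P"
    then have "v p > 0" by (rule vpos)
    then show "f p + g p = (if multiplicity p e = v p then 1 else 0)"
      unfolding f_def g_def by auto
  qed
  also have "\<dots> = (if \<forall>p\<in>P. multiplicity p e = v p then 1 else 0)"
    by (rule prod_ind[OF finP])
  also have "(if A then 1 else 0) * (if \<forall>p\<in>P. multiplicity p e = v p then 1 else 0) = (if d = e then 1 else (0::complex))"
  proof -
    have "A \<and> (\<forall>p\<in>P. multiplicity p e = v p) \<longleftrightarrow> d = e"
    proof
      assume H: "A \<and> (\<forall>p\<in>P. multiplicity p e = v p)"
      show "d = e"
      proof (rule multiplicity_eq_nat[OF d0 e0])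
        fix p :: nat assume pp: "prime p"
        show "multiplicity p d = multiplicity p e"
        proof (cases "p \<in> P")
          case True then show ?thesis using H v_def by simp
        next
          case False
          then have "multiplicity p d = 0"
            by (metis P_def d0 in_prime_factors_iff not_dvd_imp_multiplicity_0 pp neq0_conv)
          then show ?thesis using H False pp unfolding A_def by simp
        qed
      qed
    next
      assume de: "d = e"
      have "A" unfolding A_def
      proof (intro allI impI)
        fix q :: nat assume "prime q" "q \<notin> P"
        then show "multiplicity q e = 0"
          by (metis P_def de d0 in_prime_factors_iff not_dvd_imp_multiplicity_0 neq0_conv)
      qed
      then show "A \<and> (\<forall>p\<in>P. multiplicity p e = v p)" using de v_def by simp
    qed
    then show ?thesis by (cases A; cases "\<forall>p\<in>P. multiplicity p e = v p") simp_all
  qed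
  finally show ?thesis unfolding P_def .
qed



lemma aux_c:
  assumes "finite A" "\<forall>p\<in>A. (p::nat) > 0"
  shows "(\<Prod>p\<in>A. - (1 / of_nat p)) * of_nat (\<Prod>A) = (\<Prod>p\<in>A. - 1 :: complex)"
proof -
  have "(\<Prod>p\<in>A. - (1 / of_nat p)) * of_nat (\<Prod>A) = (\<Prod>p\<in>A. - (1 / of_nat p) * (of_nat p :: complex))"
    by (simp only: of_nat_prod prod.distrib[symmetric])
  also have "\<dots> = (\<Prod>p\<in>A. - 1 :: complex)"
    using assms(2) by (intro prod.cong) auto
  finally show ?thesis .
qed

lemma key:
  fixes z :: complex
  assumes m0: "m > 0" and dm: "d dvd m" and em: "e dvd m" and pr: "prim_root_unity e z"
  shows "of_nat d / of_nat m * (\<Sum>k<m div dprime d. of_rat ((\<Prod>p\<in>{p\<in>prime_factors d. \<not> p dvd k}. - (1 / of_nat p)) * (\<Prod>p\<in>{p\<in>prime_factors d. p dvd k}. 1 - 1 / of_nat p)) * z ^ (k * dprime d)) = (if d = e then 1 else 0)"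
proof -
  define P where "P = prime_factors d"
  define d' where "d' = dprime d"
  define v where "v = (\<lambda>p. multiplicity p d)"
  define r where "r = \<Prod>P"
  define N where "N = m div d'"
  define W where "W = (\<lambda>k. (\<Prod>p\<in>{p\<in>P. \<not> p dvd k}. - (1 / of_nat p)) * (\<Prod>p\<in>{p\<in>P. p dvd k}. 1 - 1 / (of_nat p :: rat)))"
  have d0: "d > 0" using m0 dm by (metis dvd_pos_nat)
  have e0: "e > 0" using m0 em by (metis dvd_pos_nat)
  have finP: "finite P" unfolding P_def by simp
  have primeP: "\<And>p. p \<in> P \<Longrightarrow> prime p" unfolding P_def by auto
  have posP: "\<And>p. p \<in> P \<Longrightarrow> p > 0" using primeP prime_gt_0_nat by blast
  have vpos: "\<And>p. p \<in> P \<Longrightarrow> v p > 0" unfolding P_def v_def using prime_factors_multiplicity by auto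
  have d'eq: "d' = (\<Prod>p\<in>P. p ^ (v p - 1))" by (simp add: d'_def dprime_def P_def v_def)
  have hd: "d = r * d'"
  proof -
    have "d = (\<Prod>p\<in>P. p ^ v p)" unfolding P_def v_def using prime_factorization_nat[OF d0] .
    also have "\<dots> = (\<Prod>p\<in>P. p * p ^ (v p - 1))"
    proof (intro prod.cong refl)
      fix p assume "p \<in> P"
      then have "v p > 0" by (rule vpos)
      then show "p ^ v p = p * p ^ (v p - 1)" by (cases "v p") simp_all
    qed
    also have "\<dots> = r * d'" by (simp add: prod.distrib r_def d'eq)
    finally show ?thesis .
  qed
  obtain q where q: "m = d * q" using dm by auto
  have d'0: "d' > 0" using hd d0 by simp
  have hN: "N = r * q" unfolding N_def using q hd d'0 by simp
  have ze: "z ^ e = 1" using pr unfolding prim_root_unity_def by simp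
  define y where "y = z ^ d'"
  have yN: "y ^ N = 1"
  proof -
    have "y ^ N = z ^ (d' * N)" by (simp add: y_def power_mult)
    also have "d' * N = m" using q hd hN by simp
    finally show ?thesis using prim_pow_eq1[OF pr e0] em by simp
  qed
  have hW: "of_rat (W k) = (\<Prod>p\<in>P. (if p dvd k then 1 else 0) + (- (1 / of_nat p)) :: complex)" for k
  proof -
    have "(\<Prod>p\<in>P. (if p dvd k then 1 else 0) + (- (1 / of_nat p)) :: complex)
        = (\<Prod>p\<in>P. if p dvd k then 1 - 1 / of_nat p else - (1 / of_nat p))"
      by (intro prod.cong) auto
    also have "\<dots> = (\<Prod>p\<in>P \<inter> {p. p dvd k}. 1 - 1 / of_nat p) * (\<Prod>p\<in>P \<inter> - {p. p dvd k}. - (1 / of_nat p))"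
      by (rule prod.If_cases[OF finP])
    also have "\<dots> = of_rat (W k)"
      unfolding W_def by (simp add: of_rat_prod of_rat_mult of_rat_diff of_rat_divide of_rat_minus Int_def mult.commute)
    finally show ?thesis by simp
  qed
  have S1: "(\<Sum>k<N. of_rat (W k) * y ^ k) = (\<Sum>T\<in>Pow P. (\<Prod>p\<in>P-T. - (1 / of_nat p)) * (if y ^ (\<Prod>T) = 1 then of_nat (N div \<Prod>T) else 0))"
  proof -
    have "(\<Sum>k<N. of_rat (W k) * y ^ k) = (\<Sum>k<N. (\<Sum>T\<in>Pow P. (if \<Prod>T dvd k then 1 else 0) * (\<Prod>p\<in>P-T. - (1 / of_nat p))) * y ^ k)"
    proof (intro sum.cong refl)
      fix k
      have "of_rat (W k) = (\<Sum>T\<in>Pow P. (\<Prod>p\<in>T. if p dvd k then 1 else 0) * (\<Prod>p\<in>P-T. - (1 / of_nat p)) :: complex)"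
        unfolding hW by (rule prod_add[OF finP])
      also have "\<dots> = (\<Sum>T\<in>Pow P. (if \<Prod>T dvd k then 1 else 0) * (\<Prod>p\<in>P-T. - (1 / of_nat p)))"
      proof (intro sum.cong refl)
        fix T assume "T \<in> Pow P"
        then have fT: "finite T" and pT: "\<forall>p\<in>T. prime p" using finP primeP finite_subset by auto
        show "(\<Prod>p\<in>T. if p dvd k then 1 else 0) * (\<Prod>p\<in>P-T. - (1 / of_nat p)) = (if \<Prod>T dvd k then 1 else 0) * (\<Prod>p\<in>P-T. - (1 / of_nat p) :: complex)"
          by (simp only: prod_ind[OF fT] prod_primes_dvd[OF fT pT])
      qed
      finally show "of_rat (W k) * y ^ k = (\<Sum>T\<in>Pow P. (if \<Prod>T dvd k then 1 else 0) * (\<Prod>p\<in>P-T. - (1 / of_nat p))) * y ^ k" by simp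
    qed
    also have "\<dots> = (\<Sum>k<N. \<Sum>T\<in>Pow P. (\<Prod>p\<in>P-T. - (1 / of_nat p)) * ((if \<Prod>T dvd k then 1 else 0) * y ^ k))"
      unfolding sum_distrib_right by (intro sum.cong refl) (simp only: mult_ac)
    also have "\<dots> = (\<Sum>T\<in>Pow P. \<Sum>k<N. (\<Prod>p\<in>P-T. - (1 / of_nat p)) * ((if \<Prod>T dvd k then 1 else 0) * y ^ k))"
      by (rule sum.swap)
    also have "\<dots> = (\<Sum>T\<in>Pow P. (\<Prod>p\<in>P-T. - (1 / of_nat p)) * (\<Sum>k<N. (if \<Prod>T dvd k then 1 else 0) * y ^ k))"
      by (simp only: sum_distrib_left)
    also have "\<dots> = (\<Sum>T\<in>Pow P. (\<Prod>p\<in>P-T. - (1 / of_nat p)) * (if y ^ (\<Prod>T) = 1 then of_nat (N div \<Prod>T) else 0))"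
    proof (intro sum.cong refl)
      fix T assume T: "T \<in> Pow P"
      then have fT: "finite T" and pT: "\<forall>p\<in>T. prime p" using finP primeP finite_subset by auto
      have s0: "\<Prod>T > 0" using pT by (simp add: prime_gt_0_nat prod_pos)
      have "\<Prod>T dvd r" unfolding r_def using T finP by (intro prod_dvd_prod_subset) auto
      then have "\<Prod>T dvd N" using hN by simp
      then show "(\<Prod>p\<in>P-T. - (1 / of_nat p)) * (\<Sum>k<N. (if \<Prod>T dvd k then 1 else 0) * y ^ k) = (\<Prod>p\<in>P-T. - (1 / of_nat p)) * (if y ^ (\<Prod>T) = 1 then of_nat (N div \<Prod>T) else 0)"
        using geom_sum[OF s0 _ yN] by simp
    qed
    finally show ?thesis .
  qed
  have S2: "of_nat d / of_nat m * ((\<Prod>p\<in>P-T. - (1 / of_nat p)) * (if y ^ (\<Prod>T) = 1 then of_nat (N div \<Prod>T) else 0)) = (\<Prod>p\<in>P-T. (-1::complex)) * (if e dvd d' * \<Prod>T then 1 else 0)"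
    if T: "T \<subseteq> P" for T
  proof -
    define s where "s = \<Prod>T"
    define u where "u = \<Prod>(P - T)"
    have fT: "finite (P - T)" using finP by simp
    have rsu: "r = u * s" unfolding r_def u_def s_def using prod.subset_diff[OF T finP] by simp
    have ys: "y ^ s = 1 \<longleftrightarrow> e dvd d' * s"
      unfolding y_def power_mult[symmetric] using prim_pow_eq1[OF pr e0] by simp
    have s0: "s > 0" unfolding s_def using T posP by (simp add: prod_pos subset_iff)
    have Nd: "N div s = u * q" using hN rsu s0 by simp
    have c: "(\<Prod>p\<in>P-T. - (1 / of_nat p)) * of_nat u = (\<Prod>p\<in>P-T. - 1 :: complex)"
      unfolding u_def using aux_c[OF fT] posP by auto
    have mdq: "(of_nat m :: complex) = of_nat d * of_nat q" using q by simp
    have q0: "q > 0" using q m0 by (cases q) auto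
    have dmq: "of_nat d / of_nat m * of_nat q = (1::complex)" using mdq d0 q0 by simp
    have eq2: "of_nat d / of_nat m * ((\<Prod>p\<in>P-T. - (1 / of_nat p)) * of_nat (u * q))
        = ((\<Prod>p\<in>P-T. - (1 / of_nat p)) * of_nat u) * (of_nat d / of_nat m * (of_nat q :: complex))"
      by (simp only: of_nat_mult mult_ac)
    show ?thesis
    proof (cases "e dvd d' * \<Prod>T")
      case True
      have Y: "y ^ (\<Prod>T) = 1" using True ys unfolding s_def by simp
      have Nd': "N div \<Prod>T = u * q" using Nd unfolding s_def .
      have "of_nat d / of_nat m * ((\<Prod>p\<in>P-T. - (1 / of_nat p)) * (if y ^ (\<Prod>T) = 1 then of_nat (N div \<Prod>T) else 0))
          = of_nat d / of_nat m * ((\<Prod>p\<in>P-T. - (1 / of_nat p)) * of_nat (u * q))"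
        by (simp only: Y Nd' if_True refl simp_thms)
      also have "\<dots> = (\<Prod>p\<in>P-T. (-1::complex))" by (simp only: eq2 dmq mult_1_right c)
      also have "\<dots> = (\<Prod>p\<in>P-T. (-1::complex)) * (if e dvd d' * \<Prod>T then 1 else 0)"
        using True by simp
      finally show ?thesis .
    next
      case False
      have Y: "y ^ (\<Prod>T) \<noteq> 1" using False ys unfolding s_def by simp
      show ?thesis using False Y by simp
    qed
  qed
  have S3: "(\<Sum>T\<in>Pow P. (\<Prod>p\<in>P-T. (-1::complex)) * (if e dvd d' * \<Prod>T then 1 else 0)) = (if d = e then 1 else 0)"
    using S3lem[OF d0 e0] unfolding P_def d'_def .
  have "of_nat d / of_nat m * (\<Sum>k<N. of_rat (W k) * z ^ (k * d')) = of_nat d / of_nat m * (\<Sum>k<N. of_rat (W k) * y ^ k)"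
    by (simp add: y_def power_mult[symmetric] mult.commute)
  also have "\<dots> = (\<Sum>T\<in>Pow P. of_nat d / of_nat m * ((\<Prod>p\<in>P-T. - (1 / of_nat p)) * (if y ^ (\<Prod>T) = 1 then of_nat (N div \<Prod>T) else 0)))"
    unfolding S1 by (simp add: sum_distrib_left)
  also have "\<dots> = (\<Sum>T\<in>Pow P. (\<Prod>p\<in>P-T. (-1::complex)) * (if e dvd d' * \<Prod>T then 1 else 0))"
    by (intro sum.cong refl) (rule S2, simp)
  also have "\<dots> = (if d = e then 1 else 0)" by (rule S3)
  finally show ?thesis unfolding W_def N_def d'_def P_def .
qed


lemma main_eval:
  fixes z :: complex
  assumes m0: "m > 0" and em: "e dvd m" and pr: "prim_root_unity e z"
  shows "eval_at m (inv_coeff m a) z = eval_at m (a e) z"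
proof -
  define D where "D = {d. d dvd m}"
  have finD: "finite D" unfolding D_def using m0 by simp
  define W where "W = (\<lambda>d k. (\<Prod>p\<in>{p\<in>prime_factors d. \<not> p dvd k}. - (1 / of_nat p)) * (\<Prod>p\<in>{p\<in>prime_factors d. p dvd k}. 1 - 1 / (of_nat p :: rat)))"
  define N where "N = (\<lambda>d. m div dprime d)"
  define idx where "idx = (\<lambda>d k l. nat ((int l - int (k * dprime d)) mod int m))"
  define E where "E = (\<lambda>d. eval_at m (a d) z)"
  have e0: "e > 0" using m0 em by (metis dvd_pos_nat)
  have ze: "z ^ e = 1" using pr unfolding prim_root_unity_def by simp
  have ic: "of_rat (inv_coeff m a l) = (\<Sum>d\<in>D. \<Sum>k<N d. (1 / of_nat m) * of_nat d * of_rat (W d k) * of_rat (a d (idx d k l)))" for l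
    unfolding inv_coeff_def D_def N_def W_def idx_def
    by (simp add: of_rat_mult of_rat_sum of_rat_divide sum_distrib_left mult_ac)
  have "eval_at m (inv_coeff m a) z = (\<Sum>l<m. \<Sum>d\<in>D. \<Sum>k<N d. (1 / of_nat m) * of_nat d * of_rat (W d k) * (of_rat (a d (idx d k l)) * z ^ l))"
    unfolding eval_at_def ic sum_distrib_right by (simp only: mult.assoc)
  also have "\<dots> = (\<Sum>d\<in>D. \<Sum>k<N d. \<Sum>l<m. (1 / of_nat m) * of_nat d * of_rat (W d k) * (of_rat (a d (idx d k l)) * z ^ l))"
    by (subst sum.swap) (rule sum.cong[OF refl], rule sum.swap)
  also have "\<dots> = (\<Sum>d\<in>D. \<Sum>k<N d. (1 / of_nat m) * of_nat d * of_rat (W d k) * (\<Sum>l<m. of_rat (a d (idx d k l)) * z ^ l))"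
    by (simp add: sum_distrib_left)
  also have "\<dots> = (\<Sum>d\<in>D. \<Sum>k<N d. (1 / of_nat m) * of_nat d * of_rat (W d k) * (z ^ (k * dprime d) * E d))"
  proof (intro sum.cong refl)
    fix d k
    show "(1 / of_nat m) * of_nat d * of_rat (W d k) * (\<Sum>l<m. of_rat (a d (idx d k l)) * z ^ l) = (1 / of_nat m) * of_nat d * of_rat (W d k) * (z ^ (k * dprime d) * E d)"
      unfolding idx_def E_def eval_at_def
      using reindex_sum[OF m0 em ze, of "\<lambda>i. of_rat (a d i)" "k * dprime d"] by simp
  qed
  also have "\<dots> = (\<Sum>d\<in>D. E d * (of_nat d / of_nat m * (\<Sum>k<N d. of_rat (W d k) * z ^ (k * dprime d))))"
    by (simp add: sum_distrib_left mult_ac)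
  also have "\<dots> = (\<Sum>d\<in>D. E d * (if d = e then 1 else 0))"
  proof (intro sum.cong refl)
    fix d assume "d \<in> D"
    then have "d dvd m" unfolding D_def by simp
    then show "E d * (of_nat d / of_nat m * (\<Sum>k<N d. of_rat (W d k) * z ^ (k * dprime d))) = E d * (if d = e then 1 else 0)"
      unfolding N_def W_def using key[OF m0 _ em pr] by simp
  qed
  also have "\<dots> = (\<Sum>d\<in>D. if d = e then E d else 0)" by (intro sum.cong) auto
  also have "\<dots> = E e" using sum.delta[OF finD, of e E] em unfolding D_def by simp
  finally show ?thesis unfolding E_def .
qed

theorem proposition5p3:
  fixes m :: nat and \<zeta> :: "nat \<Rightarrow> complex" and a :: "nat \<Rightarrow> nat \<Rightarrow> rat"
  assumes "m \<ge> 1"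
    and "\<And>d. d dvd m \<Longrightarrow> prim_root_unity d (\<zeta> d)"
  shows "wedderburn m \<zeta> (inv_coeff m a)
           = (\<lambda>d. if d dvd m then eval_at m (a d) (\<zeta> d) else 0)"
proof
  fix d
  show "wedderburn m \<zeta> (inv_coeff m a) d = (if d dvd m then eval_at m (a d) (\<zeta> d) else 0)"
    unfolding wedderburn_def using main_eval[of m d "\<zeta> d" a] assms by auto
qed

end
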